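(* Let $C\subset\mathbb{R}^d$ be a nonempty closed convex set, let $f(x)=\mathbb{E}_\xi[f(x,\xi)]$ where each $f(\cdot,\xi)$ is convex and $G$-Lipschitz on $\mathbb{R}^d$, and let $x_*\in\arg\min_{x\in C}f(x)$. Let $x_{k-1},z_k\in\mathbb{R}^d$, $0<c_k\le1$, $\eta_k>0$, a sample $\xi_k$, and set $$x_k=(1-c_k)x_{k-1}+c_kz_k,\qquad z_{k+1}=\Pi_C\big(z_k-\eta_k\nabla f(x_k,\xi_k)\big),$$ where $\nabla f(x_k,\xi_k)$ is a subgradient of $f(\cdot,\xi_k)$ at $x_k$. Then $$\|z_{k+1}-x_*\|^2\le\|z_k-x_*\|^2+\eta_k^2G^2-\frac{2}{c_k}\eta_k\left[f(x_k,\xi_k)-f(x_*,\xi_k)\right]+2\left(\frac{1}{c_k}-1\right)\eta_k\left[f(x_{k-1},\xi_k)-f(x_*,\xi_k)\right].$$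
   Context: $\Pi_C$ is the Euclidean projection onto $C$. $G$-Lipschitz means $|f(x,\xi)-f(y,\xi)|\le G\|x-y\|$ for all $x,y$. *)

theory Defs
  imports "HOL-Analysis.Analysis" "HOL-Probability.Probability"
begin

definition is_subgradient :: "('a::real_inner \<Rightarrow> real) \<Rightarrow> 'a \<Rightarrow> 'a \<Rightarrow> bool" where
  "is_subgradient h x g \<longleftrightarrow> (\<forall>y. h y \<ge> h x + inner g (y - x))"

end

theory Submission
  imports Defs
begin

theorem theorem15:
  fixes M :: "'s measure"
    and F :: "'a::euclidean_space \<Rightarrow> 's \<Rightarrow> real"
    and C :: "'a set"
    and G c \<eta> :: real
    and xstar xprev z x znext g :: 'a
    and \<xi> :: 's
  assumes "prob_space M"
    and "C \<noteq> {}" and "closed C" and "convex C"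
    and "\<And>s. s \<in> space M \<Longrightarrow> convex_on UNIV (\<lambda>y. F y s)"
    and "\<And>s. s \<in> space M \<Longrightarrow> G-lipschitz_on UNIV (\<lambda>y. F y s)"
    and "\<And>y. integrable M (F y)"
    and "xstar \<in> C"
    and "\<And>y. y \<in> C \<Longrightarrow> prob_space.expectation M (F xstar) \<le> prob_space.expectation M (F y)"
    and "0 < c" and "c \<le> 1" and "\<eta> > 0"
    and "\<xi> \<in> space M"
    and "x = (1 - c) *\<^sub>R xprev + c *\<^sub>R z"
    and "is_subgradient (\<lambda>y. F y \<xi>) x g"
    and "znext = closest_point C (z - \<eta> *\<^sub>R g)"
  shows "(norm (znext - xstar))\<^sup>2 \<le> (norm (z - xstar))\<^sup>2 + \<eta>\<^sup>2 * G\<^sup>2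
           - (2 / c) * \<eta> * (F x \<xi> - F xstar \<xi>)
           + 2 * (1 / c - 1) * \<eta> * (F xprev \<xi> - F xstar \<xi>)"
proof -
  note A = assms
  let ?f = "\<lambda>y. F y \<xi>"
  have sg: "\<And>y. F y \<xi> \<ge> F x \<xi> + inner g (y - x)" using A(15) unfolding is_subgradient_def by auto
  have lip: "G-lipschitz_on UNIV ?f" using A(6)[OF A(13)] .
  have G0: "0 \<le> G" using lipschitz_on_nonneg[OF lip] .
  have "dist (F (x + g) \<xi>) (F x \<xi>) \<le> G * dist (x + g) x" using lipschitz_onD[OF lip, of "x+g" x] by simp
  hence l1: "F (x + g) \<xi> - F x \<xi> \<le> G * norm g" by (simp add: dist_norm)
  have "F (x + g) \<xi> \<ge> F x \<xi> + inner g g" using sg[of "x + g"] by simp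
  with l1 have "(norm g)\<^sup>2 \<le> G * norm g" by (simp add: power2_norm_eq_inner)
  hence gG: "norm g \<le> G" using G0
    by (metis mult_right_le_imp_le norm_ge_zero power2_eq_square less_eq_real_def dual_order.trans)
  hence gG2: "(norm g)\<^sup>2 \<le> G\<^sup>2" by (simp add: power_mono)
  have "dist (closest_point C (z - \<eta> *\<^sub>R g)) (closest_point C xstar) \<le> dist (z - \<eta> *\<^sub>R g) xstar"
    using closest_point_lipschitz[OF A(4) A(3) A(2)] .
  hence n1: "norm (znext - xstar) \<le> norm ((z - xstar) - \<eta> *\<^sub>R g)"
    using closest_point_self[OF A(8)] A(16) by (simp add: dist_norm algebra_simps)
  hence "(norm (znext - xstar))\<^sup>2 \<le> (norm ((z - xstar) - \<eta> *\<^sub>R g))\<^sup>2" by (simp add: power_mono)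
  also have "\<dots> = (norm (z - xstar))\<^sup>2 - 2 * \<eta> * inner g (z - xstar) + \<eta>\<^sup>2 * (norm g)\<^sup>2"
    unfolding power2_norm_eq_inner by (simp add: inner_diff_left inner_diff_right inner_commute power2_eq_square algebra_simps)
  finally have s1: "(norm (znext - xstar))\<^sup>2 \<le> (norm (z - xstar))\<^sup>2 - 2 * \<eta> * inner g (z - xstar) + \<eta>\<^sup>2 * G\<^sup>2"
    using gG2 A(12) by (smt (verit) mult_left_mono zero_le_power2)
  have zx: "z - xstar = (x - xstar) + ((1 - c) / c) *\<^sub>R (x - xprev)"
  proof -
    have cd: "c * ((1 - c) / c) = 1 - c" using A(10) by simp
    have "c *\<^sub>R (z - xstar) = c *\<^sub>R ((x - xstar) + ((1 - c) / c) *\<^sub>R (x - xprev))"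
      unfolding scaleR_add_right scaleR_scaleR cd using A(14) by (simp add: algebra_simps)
    thus ?thesis using A(10) by simp
  qed
  have i1: "inner g (x - xstar) \<ge> F x \<xi> - F xstar \<xi>" using sg[of xstar] by (simp add: inner_diff_right)
  have i2: "inner g (x - xprev) \<ge> F x \<xi> - F xprev \<xi>" using sg[of xprev] by (simp add: inner_diff_right)
  have cc: "(1 - c) / c \<ge> 0" using A(10) A(11) by simp
  have "inner g (z - xstar) = inner g (x - xstar) + ((1 - c) / c) * inner g (x - xprev)"
    unfolding zx by (simp add: inner_add_right)
  also have "\<dots> \<ge> (F x \<xi> - F xstar \<xi>) + ((1 - c) / c) * (F x \<xi> - F xprev \<xi>)"
    using i1 i2 cc by (smt (verit) mult_left_mono)
  finally have s2a: "inner g (z - xstar) \<ge> (F x \<xi> - F xstar \<xi>) + ((1 - c) / c) * (F x \<xi> - F xprev \<xi>)" .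
  have s2: "inner g (z - xstar) \<ge> (1 / c) * (F x \<xi> - F xstar \<xi>) - (1 / c - 1) * (F xprev \<xi> - F xstar \<xi>)"
  proof -
    have "(1 - c) / c = 1 / c - 1" using A(10) by (simp add: field_simps)
    have "(F x \<xi> - F xstar \<xi>) + ((1 - c) / c) * (F x \<xi> - F xprev \<xi>) = (1 / c) * (F x \<xi> - F xstar \<xi>) - (1 / c - 1) * (F xprev \<xi> - F xstar \<xi>)"
      unfolding \<open>(1 - c) / c = 1 / c - 1\<close> by (simp add: algebra_simps)
    thus ?thesis using s2a by linarith
  qed
  have "2 * \<eta> * inner g (z - xstar) \<ge> 2 * \<eta> * ((1 / c) * (F x \<xi> - F xstar \<xi>) - (1 / c - 1) * (F xprev \<xi> - F xstar \<xi>))"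
    using s2 A(12) by simp
  moreover have "(2 / c) * \<eta> * (F x \<xi> - F xstar \<xi>) - 2 * (1 / c - 1) * \<eta> * (F xprev \<xi> - F xstar \<xi>)
     = 2 * \<eta> * ((1 / c) * (F x \<xi> - F xstar \<xi>) - (1 / c - 1) * (F xprev \<xi> - F xstar \<xi>))"
    by (simp add: algebra_simps add_divide_distrib diff_divide_distrib)
  ultimately show ?thesis using s1 by linarith
qed

end
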